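(* Assume the setting in the context (in particular Assumption (A)). Let $\rho>0$, let $v_0\in V_f(\rho)$ and let $n$ be an integer with $n>\bar n_\rho$. Consider the fixed-rate restart recursion $v_{j+1}=\mathcal{A}(v_j,n)$, $j\geq 0$. Let $\epsilon>0$. Then: (i) the inequality $f(v_{M-1})-f(v_M)\leq \epsilon$ holds for every integer $M\geq \bar M$, where $$\bar M := 1+\frac{1}{2(\ln n-\ln \bar n_\rho)}\ln\left(1+\frac{f(v_0)-f^*}{\epsilon}\right);$$ (ii) if $n=\lceil e\,\bar n_\rho\rceil$, then the total number of iterations of $\mathcal{A}$ required to attain $f(v_{j-1})-f(v_j)\leq\epsilon$ (i.e. $n$ times the smallest $j\geq 1$ for which this holds) is upper bounded by $$\bar N_F^* := \lceil e\,\bar n_\rho\rceil\left\lceil 1+\frac12\ln\left(1+\frac{f(v_0)-f^*}{\epsilon}\right)\right\rceil.$$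
   Context: Let $f:\mathbb{R}^n\to(-\infty,\infty]$ be a proper closed convex function such that the problem $f^*=\min_{x\in\mathbb{R}^n}f(x)$ is solvable. Let $\Omega_f=\{x: f(x)=f^*\}$ be the optimal set, fix a norm $\|\cdot\|$ on $\mathbb{R}^n$ with dual norm $\|y\|_*=\sup\{y^Tz:\|z\|\leq 1\}$, and for $x\in\mathbb{R}^n$ let $\bar x=\arg\min_{z\in\Omega_f}\|x-z\|$. For $\rho\geq0$ let $V_f(\rho)=\{x\in\mathbb{R}^n: f(x)-f^*\leq\rho\}$. Let $\mathcal{A}$ be an iterative algorithm: for an initial point $x_0\in\mathrm{dom} f$ and integer $k\geq1$, $\mathcal{A}(x_0,k)\in\mathbb{R}^n$ denotes its $k$-th iterate started from $x_0$. Assumption (A): (i) for every $\rho>0$ there is $\mu_\rho>0$ with $f(x_0)-f^*\geq\frac{\mu_\rho}{2}\|x_0-\bar x_0\|^2$ for all $x_0\in V_f(\rho)$; (ii) there exist constants $a_f>0$, $L_f>0$ and a map $g:\mathbb{R}^n\to\mathbb{R}^n$ with $g(x)=0\iff x\in\Omega_f$ such that for every $x_0\in\mathrm{dom} f$: $f(\mathcal{A}(x_0,1))\leq f(x_0)-\frac{1}{2L_f}\|g(x_0)\|_*^2$ and $f(\mathcal{A}(x_0,k))-f^*\leq\frac{a_f}{(k+1)^2}\|x_0-\bar x_0\|^2$ for all $k\geq1$; (iii) $\bar n_\rho:=\max\{\frac12,\sqrt{2a_f/\mu_\rho}\}$. Here $e$ is Euler's number and $\lceil\cdot\rceil$ the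 ceiling. *)

theory Defs
  imports "HOL-Analysis.Analysis"
begin

definition is_norm :: "(real^'n \<Rightarrow> real) \<Rightarrow> bool" where
  "is_norm N \<longleftrightarrow>
     (\<forall>x. 0 \<le> N x) \<and> (\<forall>x. N x = 0 \<longleftrightarrow> x = 0) \<and>
     (\<forall>c x. N (c *\<^sub>R x) = \<bar>c\<bar> * N x) \<and> (\<forall>x y. N (x + y) \<le> N x + N y)"

definition dual_norm :: "(real^'n \<Rightarrow> real) \<Rightarrow> real^'n \<Rightarrow> real" where
  "dual_norm N y = Sup {y \<bullet> z | z. N z \<le> 1}"

definition dist_to :: "(real^'n \<Rightarrow> real) \<Rightarrow> (real^'n) set \<Rightarrow> real^'n \<Rightarrow> real" where
  "dist_to N S x = Inf {N (x - z) | z. z \<in> S}"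

definition epigraph_e :: "(real^'n \<Rightarrow> ereal) \<Rightarrow> ((real^'n) \<times> real) set" where
  "epigraph_e f = {(x, t). f x \<le> ereal t}"

definition proper_closed_convex :: "(real^'n \<Rightarrow> ereal) \<Rightarrow> bool" where
  "proper_closed_convex f \<longleftrightarrow>
     (\<forall>x. f x \<noteq> -\<infinity>) \<and> (\<exists>x. f x \<noteq> \<infinity>) \<and>
     convex (epigraph_e f) \<and> closed (epigraph_e f)"

definition edom :: "(real^'n \<Rightarrow> ereal) \<Rightarrow> (real^'n) set" where
  "edom f = {x. f x < \<infinity>}"

end

theory Submission
  imports Defs
begin

theorem mainTheorem1:
  fixes f :: "real^'n \<Rightarrow> ereal"
    and fs :: real
    and N :: "real^'n \<Rightarrow> real"
    and Alg :: "real^'n \<Rightarrow> nat \<Rightarrow> real^'n"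
    and g :: "real^'n \<Rightarrow> real^'n"
    and mu :: "real \<Rightarrow> real"
    and a L \<rho> \<epsilon> :: real
    and v0 :: "real^'n"
    and n :: nat
  assumes pcc: "proper_closed_convex f"
    and fs_min: "\<forall>x. ereal fs \<le> f x"
    and fs_att: "\<exists>x. f x = ereal fs"
    and N_norm: "is_norm N"
    and A_i: "\<forall>r>0. mu r > 0 \<and>
              (\<forall>x0. f x0 \<le> ereal (fs + r) \<longrightarrow>
                 f x0 - ereal fs \<ge> ereal (mu r / 2 * (dist_to N {x. f x = ereal fs} x0)\<^sup>2))"
    and a_pos: "a > 0" and L_pos: "L > 0"
    and g_zero: "\<forall>x. g x = 0 \<longleftrightarrow> f x = ereal fs"
    and A_desc: "\<forall>x0\<in>edom f.
              f (Alg x0 1) \<le> f x0 - ereal (1 / (2 * L) * (dual_norm N (g x0))\<^sup>2)"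
    and A_rate: "\<forall>x0\<in>edom f. \<forall>k\<ge>1.
              f (Alg x0 k) - ereal fs \<le>
                ereal (a / (real k + 1)\<^sup>2 * (dist_to N {x. f x = ereal fs} x0)\<^sup>2)"
    and rho_pos: "\<rho> > 0"
    and v0_V: "f v0 - ereal fs \<le> ereal \<rho>"
    and n_gt: "real n > max (1/2) (sqrt (2 * a / mu \<rho>))"
    and eps_pos: "\<epsilon> > 0"
  shows "(let nbar = max (1/2) (sqrt (2 * a / mu \<rho>));
              v = (\<lambda>j. ((\<lambda>x. Alg x n) ^^ j) v0);
              D0 = real_of_ereal (f v0) - fs
          in (\<forall>M::nat. real M \<ge> 1 + 1 / (2 * (ln (real n) - ln nbar)) * ln (1 + D0 / \<epsilon>)
                  \<longrightarrow> f (v (M - 1)) - f (v M) \<le> ereal \<epsilon>)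
           \<and> (real n = real_of_int \<lceil>exp 1 * nbar\<rceil> \<longrightarrow>
                real n * real (LEAST j::nat. j \<ge> 1 \<and> f (v (j - 1)) - f (v j) \<le> ereal \<epsilon>)
                  \<le> real_of_int \<lceil>exp 1 * nbar\<rceil> * real_of_int \<lceil>1 + 1/2 * ln (1 + D0 / \<epsilon>)\<rceil>))"
proof -
  define nbar where "nbar = max (1/2) (sqrt (2 * a / mu \<rho>))"
  define v where "v = (\<lambda>j. ((\<lambda>x. Alg x n) ^^ j) v0)"
  define D0 where "D0 = real_of_ereal (f v0) - fs"
  define q where "q = (nbar / real n)\<^sup>2"
  define m0 where "m0 = mu \<rho>"
  have m0pos: "m0 > 0" using A_i rho_pos unfolding m0_def by auto
  have nbar_pos: "nbar > 0" unfolding nbar_def by auto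
  have nnb: "real n > nbar" using n_gt unfolding nbar_def by auto
  have npos: "real n > 0" using nnb nbar_pos by linarith
  have n1: "n \<ge> 1" using npos by simp
  have q0: "q \<ge> 0" unfolding q_def by simp
  have q1: "q < 1"
  proof -
    have "nbar / real n < 1" "0 \<le> nbar / real n" using nbar_pos nnb by auto
    hence "(nbar / real n) ^ 2 < 1 ^ 2" by (intro power_strict_mono) auto
    thus ?thesis unfolding q_def by simp
  qed
  have amu: "2 * a / m0 \<le> nbar\<^sup>2"
  proof -
    have "sqrt (2 * a / m0) \<le> nbar" unfolding nbar_def m0_def by simp
    moreover have "2 * a / m0 \<ge> 0" using a_pos m0pos by simp
    ultimately show ?thesis
      by (metis real_sqrt_le_iff real_sqrt_pow2 power2_eq_square sqrt_le_D)
  qed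
  have fv0: "f v0 = ereal (fs + D0)" and D0nn: "D0 \<ge> 0" and D0rho: "D0 \<le> \<rho>"
  proof -
    have "f v0 \<noteq> \<infinity>" using v0_V by auto
    moreover have "f v0 \<ge> ereal fs" using fs_min by auto
    ultimately obtain r where r: "f v0 = ereal r" by (cases "f v0") auto
    show "f v0 = ereal (fs + D0)" using r unfolding D0_def by simp
    show "D0 \<ge> 0" using r fs_min unfolding D0_def by (metis ereal_less_eq(3) diff_ge_0_iff_ge real_of_ereal.simps(1))
    show "D0 \<le> \<rho>" using r v0_V unfolding D0_def by simp
  qed
  have key: "\<exists>d. f (v j) = ereal (fs + d) \<and> 0 \<le> d \<and> d \<le> q ^ j * D0" for j
  proof (induction j)
    case 0
    then show ?case using fv0 D0nn unfolding v_def by auto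
  next
    case (Suc j)
    then obtain d where d: "f (v j) = ereal (fs + d)" "0 \<le> d" "d \<le> q ^ j * D0" by blast
    have "q ^ j \<le> 1" using q0 q1 by (simp add: power_le_one)
    hence "d \<le> D0" using d(3) D0nn by (metis mult_left_le_one_le order_trans q0 zero_le_power)
    hence drho: "d \<le> \<rho>" using D0rho by linarith
    have vS: "v (Suc j) = Alg (v j) n" unfolding v_def by simp
    define dd where "dd = dist_to N {x. f x = ereal fs} (v j)"
    have fle: "f (v j) \<le> ereal (fs + \<rho>)" using d(1) drho by simp
    have "ereal (m0 / 2 * dd\<^sup>2) \<le> f (v j) - ereal fs"
      using A_i rho_pos fle unfolding m0_def dd_def by blast
    hence dd2: "m0 / 2 * dd\<^sup>2 \<le> d" using d(1) by simp
    have ed: "v j \<in> edom f" using d(1) unfolding edom_def by simp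
    have "f (v (Suc j)) - ereal fs \<le> ereal (a / (real n + 1)\<^sup>2 * dd\<^sup>2)"
      using A_rate ed n1 vS unfolding dd_def by auto
    moreover have "f (v (Suc j)) \<ge> ereal fs" using fs_min by auto
    ultimately have calculation: "f (v (Suc j)) - ereal fs \<le> ereal (a / (real n + 1)\<^sup>2 * dd\<^sup>2) \<and> f (v (Suc j)) \<ge> ereal fs" by simp
    obtain d' where d': "f (v (Suc j)) = ereal (fs + d')" "0 \<le> d'"
        "d' \<le> a / (real n + 1)\<^sup>2 * dd\<^sup>2"
    proof (cases "f (v (Suc j))")
      case (real r)
      show ?thesis by (rule that[of "r - fs"]) (use real calculation in auto)
    qed (use calculation in auto)
    have "dd\<^sup>2 \<le> 2 * d / m0" using dd2 m0pos by (simp add: field_simps)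
    hence "a / (real n + 1)\<^sup>2 * dd\<^sup>2 \<le> a / (real n + 1)\<^sup>2 * (2 * d / m0)"
      using a_pos by (intro mult_left_mono) auto
    also have "\<dots> = (2 * a / m0) / (real n + 1)\<^sup>2 * d" by (simp add: field_simps)
    also have "\<dots> \<le> nbar\<^sup>2 / (real n + 1)\<^sup>2 * d"
      using amu d(2) by (intro mult_right_mono divide_right_mono) auto
    also have "\<dots> \<le> nbar\<^sup>2 / (real n)\<^sup>2 * d"
      using npos d(2) by (intro mult_right_mono divide_left_mono) (auto simp: power_mono)
    also have "\<dots> = q * d" unfolding q_def by (simp add: power_divide)
    also have "\<dots> \<le> q * (q ^ j * D0)" using d(3) q0 by (simp add: mult_left_mono)
    finally show ?case using d' by auto
  qed
  have c_pos: "ln (real n) - ln nbar > 0" using nnb nbar_pos by simp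
  have partI: "f (v (M - 1)) - f (v M) \<le> ereal \<epsilon>"
    if M: "real M \<ge> 1 + 1 / (2 * (ln (real n) - ln nbar)) * ln (1 + D0 / \<epsilon>)" for M :: nat
  proof -
    define c where "c = ln (real n) - ln nbar"
    define Lg where "Lg = ln (1 + D0 / \<epsilon>)"
    have Lg0: "Lg \<ge> 0" unfolding Lg_def using D0nn eps_pos by simp
    have c0: "c > 0" using c_pos unfolding c_def .
    have "1 / (2 * c) * Lg \<ge> 0" using Lg0 c0 by simp
    hence M1: "M \<ge> 1" using M unfolding c_def Lg_def by linarith
    define m where "m = M - 1"
    have Mm: "M = Suc m" using M1 unfolding m_def by simp
    have mge: "real m \<ge> 1 / (2 * c) * Lg" using M Mm unfolding c_def Lg_def by simp
    hence "2 * c * real m \<ge> Lg" using c0 by (simp add: field_simps)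
    obtain d1 where d1: "f (v m) = ereal (fs + d1)" "0 \<le> d1" "d1 \<le> q ^ m * D0" using key by blast
    obtain d2 where d2: "f (v M) = ereal (fs + d2)" "0 \<le> d2" using key by blast
    have qm: "q ^ m * D0 \<le> \<epsilon>"
    proof (cases "D0 = 0")
      case True then show ?thesis using eps_pos by simp
    next
      case False
      have qpos: "q > 0" unfolding q_def using nbar_pos npos by simp
      have "ln (q ^ m) = real m * (2 * (ln nbar - ln (real n)))"
        unfolding q_def using nbar_pos npos by (simp add: ln_realpow ln_div)
      also have "\<dots> = - (2 * c * real m)" unfolding c_def by (simp add: algebra_simps)
      also have "\<dots> \<le> - Lg" using \<open>2 * c * real m \<ge> Lg\<close> by simp
      also have "\<dots> = ln (1 / (1 + D0 / \<epsilon>))" unfolding Lg_def using D0nn eps_pos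
        by (simp add: ln_div)
      finally have lnle: "ln (q ^ m) \<le> ln (1 / (1 + D0 / \<epsilon>))" .
      have "0 \<le> D0 / \<epsilon>" using D0nn eps_pos by simp
      hence "0 < 1 / (1 + D0 / \<epsilon>)" by simp
      hence "q ^ m \<le> 1 / (1 + D0 / \<epsilon>)" using qpos lnle
        by (subst ln_le_cancel_iff[symmetric]) auto
      hence "q ^ m * D0 \<le> 1 / (1 + D0 / \<epsilon>) * D0" using D0nn by (intro mult_right_mono) auto
      also have "\<dots> = \<epsilon> * D0 / (\<epsilon> + D0)" using eps_pos D0nn by (simp add: field_simps)
      also have "\<dots> \<le> \<epsilon>" using eps_pos D0nn by (simp add: field_simps)
      finally show ?thesis .
    qed
    show ?thesis using d1 d2 qm Mm by simp
  qed
  have partII: "real n * real (LEAST j::nat. j \<ge> 1 \<and> f (v (j - 1)) - f (v j) \<le> ereal \<epsilon>)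
                  \<le> real_of_int \<lceil>exp 1 * nbar\<rceil> * real_of_int \<lceil>1 + 1/2 * ln (1 + D0 / \<epsilon>)\<rceil>"
    if hn: "real n = real_of_int \<lceil>exp 1 * nbar\<rceil>"
  proof -
    define Lg where "Lg = ln (1 + D0 / \<epsilon>)"
    have Lg0: "Lg \<ge> 0" unfolding Lg_def using D0nn eps_pos by simp
    define K where "K = nat \<lceil>1 + 1/2 * Lg\<rceil>"
    have Kr: "real K = real_of_int \<lceil>1 + 1/2 * Lg\<rceil>" unfolding K_def using Lg0 by simp
    have "real n \<ge> exp 1 * nbar" using hn by simp
    hence "ln (real n) \<ge> ln (exp 1 * nbar)" using nbar_pos by (intro ln_mono) auto
    hence c1: "ln (real n) - ln nbar \<ge> 1" using nbar_pos by (simp add: ln_mult)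
    have "1 / (2 * (ln (real n) - ln nbar)) * Lg \<le> 1/2 * Lg"
      using c1 Lg0 by (intro mult_right_mono) (auto simp: field_simps)
    hence "real K \<ge> 1 + 1 / (2 * (ln (real n) - ln nbar)) * Lg" using Kr by linarith
    hence KM: "real K \<ge> 1 + 1 / (2 * (ln (real n) - ln nbar)) * ln (1 + D0 / \<epsilon>)"
      unfolding Lg_def .
    have "1 / (2 * (ln (real n) - ln nbar)) * Lg \<ge> 0" using c_pos Lg0 by simp
    hence "real K \<ge> 1" using KM unfolding Lg_def by linarith
    hence PK: "K \<ge> 1 \<and> f (v (K - 1)) - f (v K) \<le> ereal \<epsilon>"
      using partI[OF KM] by simp
    hence "(LEAST j::nat. j \<ge> 1 \<and> f (v (j - 1)) - f (v j) \<le> ereal \<epsilon>) \<le> K"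
      by (rule Least_le)
    hence "real n * real (LEAST j::nat. j \<ge> 1 \<and> f (v (j - 1)) - f (v j) \<le> ereal \<epsilon>) \<le> real n * real K"
      by (simp add: mult_left_mono)
    thus ?thesis using hn Kr unfolding Lg_def by simp
  qed
  show ?thesis unfolding Let_def
    using partI partII unfolding nbar_def v_def D0_def by blast
qed

end
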